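(* Let $n\ge 3$ and for $p>0$ define $$\|M_{S_n}\|_p^{*}:=\sup_{y\ge 1}\left(\frac{y^p+(n-1)\left(\frac{1+y}{2}\right)^p}{y^p+(n-1)}\right)^{1/p}.$$ Then $$\lim_{p\to\infty}\left(\|M_{S_n}\|_p^{*}\right)^p=\frac{1+\sqrt{n}}{2}.$$ *)

theory Defs
  imports "HOL-Analysis.Analysis"
begin

definition MSn_norm :: "nat \<Rightarrow> real \<Rightarrow> real" where
  "MSn_norm n p = (SUP y\<in>{1..}. ((y powr p + (real n - 1) * ((1 + y) / 2) powr p)
                                  / (y powr p + (real n - 1))) powr (1 / p))"

end

theory Submission imports Defs "HOL-Probability.Hoeffding" "HOL-Real_Asymp.Real_Asymp" begin

definition Fr :: "nat \<Rightarrow> real \<Rightarrow> real \<Rightarrow> real" where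
  "Fr n p y = (y powr p + (real n - 1) * ((1 + y) / 2) powr p) / (y powr p + (real n - 1))"

lemma MSn_Fr: "MSn_norm n p = (SUP y\<in>{1..}. Fr n p y powr (1/p))"
  unfolding MSn_norm_def Fr_def by simp

lemma phi_bound:
  fixes y :: real assumes "y \<ge> 1"
  shows "ln ((1 + y) / 2) \<le> ln y / 2 + (ln y)\<^sup>2 / 8"
proof -
  have e: "exp (ln y) = y" using assms by simp
  have H: "- ln y * (1/2) + ln (1 + (1/2) * (exp (ln y) - 1)) \<le> (ln y)\<^sup>2 / 8"
    using Hoeffdings_lemma_aux[of "ln y" "1/2"] assms by simp
  have q: "1 + (1/2) * (exp (ln y) - 1) = (1 + y) / 2" unfolding e by (simp add: field_simps)
  have "- ln y * (1/2) + ln ((1 + y) / 2) \<le> (ln y)\<^sup>2 / 8" using H unfolding q .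
  then show ?thesis by linarith
qed

lemma gbound:
  fixes s N r :: real
  assumes "r \<ge> 1" "N = r\<^sup>2 - 1"
  shows "(1 + r) / 2 * (s\<^sup>2 + N) - (s\<^sup>2 + N * s) = (r - 1) / 2 * (s - (r + 1))\<^sup>2"
  unfolding assms(2) by (simp add: power2_eq_square field_simps)

lemma gle:
  fixes s N r :: real
  assumes "r \<ge> 1" "N = r\<^sup>2 - 1"
  shows "s\<^sup>2 + N * s \<le> (1 + r) / 2 * (s\<^sup>2 + N)"
proof -
  have "0 \<le> (r - 1) / 2 * (s - (r + 1))\<^sup>2" using assms by simp
  thus ?thesis using gbound[OF assms, of s] by linarith
qed

lemma Fr_exp:
  assumes "y \<ge> 1"
  shows "Fr n p y = (exp (p * ln y) + (real n - 1) * exp (p * ln ((1 + y) / 2))) / (exp (p * ln y) + (real n - 1))"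
  using assms unfolding Fr_def powr_def by (simp add: mult.commute)

lemma ratio_le:
  fixes A B N :: real
  assumes "A \<ge> 1" "B \<ge> 1" "N \<ge> 0"
  shows "(A + N * B) / (A + N) \<le> 1 + N * (B / A)"
proof -
  have "(A + N * B) / (A + N) - 1 = N * (B - 1) / (A + N)" using assms by (simp add: field_simps)
  also have "\<dots> \<le> N * (B / A)"
  proof -
    have "(B - 1) / (A + N) \<le> B / A" using assms by (simp add: field_simps)
    thus ?thesis using assms by (simp add: mult_left_mono times_divide_eq_right[symmetric] del: times_divide_eq_right)
  qed
  finally show ?thesis by simp
qed

lemma upper:
  assumes n3: "n \<ge> 3" and p: "p > 0" and y: "y \<ge> 1"
  defines "N \<equiv> real n - 1" and "L \<equiv> (1 + sqrt (real n)) / 2"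
  defines "K \<equiv> N / (L - 1)"
  defines "M \<equiv> K powr (8/3)"
  shows "Fr n p y \<le> max (L * exp ((ln M)\<^sup>2 / 8 / p)) (1 + N * (3/4) powr p)"
proof -
  have N2: "N \<ge> 2" using n3 unfolding N_def by simp
  have r1: "sqrt (real n) > 1" using n3 by simp
  have L1: "L > 1" using r1 unfolding L_def by simp
  have K0: "K > 0" using L1 N2 unfolding K_def by simp
  have M0: "M > 0" using K0 unfolding M_def by simp
  define E where "E = exp ((ln M)\<^sup>2 / 8 / p)"
  have E1: "E \<ge> 1" unfolding E_def using p by simp
  define u where "u = ln y"
  define v where "v = ln ((1 + y) / 2)"
  have u0: "u \<ge> 0" unfolding u_def using y by simp
  have v0: "v \<ge> 0" unfolding v_def using y by simp
  have vu: "v \<le> u/2 + u\<^sup>2/8" unfolding u_def v_def using phi_bound[OF y] .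
  define A where "A = exp (p * u)"
  define B where "B = exp (p * v)"
  have A1: "A \<ge> 1" unfolding A_def using p u0 by simp
  have B1: "B \<ge> 1" unfolding B_def using p v0 by simp
  have F: "Fr n p y = (A + N * B) / (A + N)"
    unfolding A_def B_def u_def v_def N_def using Fr_exp[OF y] by simp
  have R: "Fr n p y \<le> 1 + N * (B / A)" unfolding F using ratio_le[OF A1 B1] N2 by simp
  have BA: "B / A = exp (p * (v - u))" unfolding A_def B_def by (simp add: exp_diff right_diff_distrib)
  show ?thesis
  proof (cases "y \<ge> 2")
    case True
    have "v - u = ln ((1 + y) / (2 * y))" unfolding u_def v_def using y by (simp add: ln_div ln_mult)
    also have "\<dots> \<le> ln (3/4)" using True by (simp add: field_simps)
    finally have "p * (v - u) \<le> p * ln (3/4)" using p by simp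
    then have "B / A \<le> (3/4) powr p" unfolding BA powr_def by simp
    then have "Fr n p y \<le> 1 + N * (3/4) powr p" using R N2 by (smt (verit) mult_left_mono)
    thus ?thesis by simp
  next
    case False
    show ?thesis
    proof (cases "p * u > ln M")
      case True
      have "u \<le> ln 2" unfolding u_def using False y by simp
      also have "\<dots> \<le> 1" using ln_2_less_1 by simp
      finally have "u\<^sup>2 \<le> u" using u0 by (simp add: power2_eq_square mult_left_le)
      then have vu3: "v - u \<le> -(3/8) * u" using vu by simp
      have "p * (v - u) \<le> -(3/8) * (p * u)" using mult_left_mono[OF vu3, of p] p by simp
      also have "\<dots> < -(3/8) * ln M" using True by simp
      finally have "B / A < exp (-(3/8) * ln M)" unfolding BA by simp
      also have "exp (-(3/8) * ln M) = M powr (-(3/8))" using M0 by (simp add: powr_def mult.commute)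
      also have "\<dots> = K powr (-1)" unfolding M_def by (simp add: powr_powr)
      also have "\<dots> = 1 / K" using K0 by (simp add: powr_minus divide_inverse)
      finally have "B / A < 1 / K" .
      then have "N * (B / A) \<le> N * (1 / K)" using N2 by (intro mult_left_mono) simp_all
      also have "N * (1 / K) = L - 1" unfolding K_def using L1 N2 by simp
      finally have "Fr n p y \<le> L" using R by simp
      also have "L \<le> L * exp ((ln M)\<^sup>2 / 8 / p)" using L1 E1 unfolding E_def by simp
      finally show ?thesis by simp
    next
      case False
      then have pu: "p * u \<le> ln M" by simp
      have "(p * u)\<^sup>2 \<le> (ln M)\<^sup>2" using pu p u0 by (simp add: power_mono)
      have "p * v \<le> p * u / 2 + p * u\<^sup>2 / 8" using vu p by (smt (verit) distrib_left mult_left_mono times_divide_eq_right)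
      also have "p * u\<^sup>2 / 8 = (p * u)\<^sup>2 / 8 / p" using p by (simp add: power2_eq_square)
      also have "\<dots> \<le> (ln M)\<^sup>2 / 8 / p" using \<open>(p * u)\<^sup>2 \<le> (ln M)\<^sup>2\<close> p by (simp add: divide_right_mono)
      finally have "B \<le> exp (p * u / 2) * E" unfolding B_def E_def by (simp add: exp_add[symmetric])
      define s where "s = exp (p * u / 2)"
      have s0: "s > 0" unfolding s_def by simp
      have sA: "s\<^sup>2 = A" unfolding s_def A_def by (simp add: power2_eq_square exp_add[symmetric])
      have "Fr n p y \<le> (A + N * (s * E)) / (A + N)" unfolding F
        using \<open>B \<le> exp (p * u / 2) * E\<close> N2 A1 unfolding s_def by (simp add: divide_right_mono)
      also have "\<dots> \<le> E * (A + N * s) / (A + N)"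
        using E1 N2 s0 A1 by (simp add: divide_right_mono algebra_simps)
      also have "\<dots> \<le> E * L"
      proof -
        have "s\<^sup>2 + N * s \<le> (1 + sqrt (real n)) / 2 * (s\<^sup>2 + N)"
          by (rule gle) (use r1 n3 in \<open>simp_all add: N_def\<close>)
        then have g: "A + N * s \<le> L * (A + N)" unfolding sA L_def .
        have "E * (A + N * s) \<le> (E * L) * (A + N)" using mult_left_mono[OF g, of E] E1 by (simp add: mult.assoc)
        then show ?thesis using A1 N2 by (simp add: divide_le_eq)
      qed
      finally show ?thesis unfolding E_def by (simp add: mult.commute)
    qed
  qed
qed

lemma Fr_pos: assumes "n \<ge> 3" "y \<ge> 1" shows "Fr n p y > 0"
  using assms unfolding Fr_def by (intro divide_pos_pos add_pos_nonneg) auto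

lemma lim_half: assumes "(T::real) > 1"
  shows "((\<lambda>p. ((1 + T powr (1/p))/2) powr p) \<longlongrightarrow> sqrt T) at_top"
proof -
  have "((\<lambda>p. ((1 + T powr (1/p))/2) powr p) \<longlongrightarrow> exp (ln T / 2)) at_top"
    using assms by real_asymp
  moreover have "exp (ln T / 2) = sqrt T" using assms by (simp add: powr_half_sqrt[symmetric] powr_def)
  ultimately show ?thesis by simp
qed

lemma lower_lim:
  assumes n3: "n \<ge> 3"
  defines "T \<equiv> (1 + sqrt (real n))\<^sup>2"
  shows "((\<lambda>p. Fr n p (T powr (1/p))) \<longlongrightarrow> (1 + sqrt (real n)) / 2) at_top"
proof -
  define N where "N = real n - 1"
  define r where "r = sqrt (real n)"
  have r1: "r > 1" unfolding r_def using n3 by simp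
  have T1: "T > 1" unfolding T_def using r1 r_def by (simp add: power2_eq_square) (smt (verit) mult_less_cancel_right1 r1)
  have N2: "N \<ge> 2" unfolding N_def using n3 by simp
  have ev: "\<forall>\<^sub>F p in at_top. (T + N * ((1 + T powr (1/p))/2) powr p) / (T + N) = Fr n p (T powr (1/p))"
    using eventually_gt_at_top[of "0::real"]
  proof eventually_elim
    case (elim p)
    have "(T powr (1/p)) powr p = T" using elim T1 by (simp add: powr_powr)
    thus ?case unfolding Fr_def N_def by simp
  qed
  have "((\<lambda>p. (T + N * ((1 + T powr (1/p))/2) powr p) / (T + N)) \<longlongrightarrow> (T + N * sqrt T) / (T + N)) at_top"
    using N2 T1 by (intro tendsto_intros lim_half) auto
  moreover have "(T + N * sqrt T) / (T + N) = (1 + r) / 2"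
  proof -
    have sT: "sqrt T = 1 + r" unfolding T_def r_def by simp
    have "(1 + r) / 2 * ((1 + r)\<^sup>2 + N) - ((1 + r)\<^sup>2 + N * (1 + r)) = (r - 1) / 2 * ((1 + r) - (r + 1))\<^sup>2"
      by (rule gbound) (use r1 n3 in \<open>simp_all add: N_def r_def\<close>)
    then have "(1 + r) / 2 * (T + N) = T + N * sqrt T" unfolding sT T_def r_def by simp
    then show ?thesis using N2 T1 by (simp add: divide_eq_eq)
  qed
  ultimately show ?thesis using Lim_transform_eventually[OF _ ev] unfolding r_def by simp
qed

theorem lemma3p5:
  fixes n :: nat
  assumes "n \<ge> 3"
  shows "((\<lambda>p. (MSn_norm n p) powr p) \<longlongrightarrow> (1 + sqrt (real n)) / 2) at_top"
proof -
  define N where "N = real n - 1"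
  define L where "L = (1 + sqrt (real n)) / 2"
  define K where "K = N / (L - 1)"
  define M where "M = K powr (8/3)"
  define T where "T = (1 + sqrt (real n))\<^sup>2"
  define U where "U = (\<lambda>p. max (L * exp ((ln M)\<^sup>2 / 8 / p)) (1 + N * (3/4) powr p))"
  have L1: "L > 1" unfolding L_def using assms by simp
  have N2: "N \<ge> 2" unfolding N_def using assms by simp
  have T1: "T \<ge> 1" unfolding T_def by (simp add: one_le_power)
  have up: "Fr n p y \<le> U p" if "p > 0" "y \<ge> 1" for p y
    using upper[OF assms that] unfolding U_def L_def N_def K_def M_def by simp
  have U0: "U p > 0" for p unfolding U_def using L1 by (simp add: less_max_iff_disj)
  have ULim: "(U \<longlongrightarrow> L) at_top"
  proof -
    have "(U \<longlongrightarrow> max (L * 1) (1 + N * 0)) at_top" unfolding U_def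
      by (intro tendsto_intros) real_asymp+
    thus ?thesis using L1 by simp
  qed
  have bounds: "Fr n p (T powr (1/p)) \<le> MSn_norm n p powr p \<and> MSn_norm n p powr p \<le> U p" if p: "p > 0" for p
  proof -
    let ?f = "\<lambda>y. Fr n p y powr (1/p)"
    have yp: "T powr (1/p) \<in> {1..}" using T1 p by (simp add: ge_one_powr_ge_zero)
    have fb: "?f y \<le> U p powr (1/p)" if "y \<in> {1..}" for y
      using up[OF p] that Fr_pos[OF assms] p by (intro powr_mono2) (auto intro: less_imp_le)
    have bdd: "bdd_above (?f ` {1..})" using fb by (intro bdd_aboveI2) 
    have S1: "MSn_norm n p \<le> U p powr (1/p)" unfolding MSn_Fr
      by (rule cSUP_least) (use fb in auto)
    have S2: "?f (T powr (1/p)) \<le> MSn_norm n p" unfolding MSn_Fr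
      by (rule cSUP_upper[OF yp bdd])
    have S0: "0 \<le> MSn_norm n p" using S2 by (smt (verit) powr_ge_zero)
    have "MSn_norm n p powr p \<le> (U p powr (1/p)) powr p" using S1 S0 p by (intro powr_mono2) auto
    also have "\<dots> = U p" using U0[of p] p by (simp add: powr_powr)
    finally have c2: "MSn_norm n p powr p \<le> U p" .
    have "Fr n p (T powr (1/p)) = (?f (T powr (1/p))) powr p"
      using Fr_pos[OF assms, of "T powr (1/p)" p] yp p by (simp add: powr_powr)
    also have "\<dots> \<le> MSn_norm n p powr p" using S2 p by (intro powr_mono2) auto
    finally show ?thesis using c2 by simp
  qed
  show ?thesis
  proof (rule tendsto_sandwich[OF _ _ lower_lim[OF assms] ULim[unfolded L_def]])
    show "\<forall>\<^sub>F p in at_top. Fr n p ((1 + sqrt (real n))\<^sup>2 powr (1 / p)) \<le> MSn_norm n p powr p"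
      using eventually_gt_at_top[of "0::real"] by eventually_elim (use bounds in \<open>auto simp: T_def\<close>)
    show "\<forall>\<^sub>F p in at_top. MSn_norm n p powr p \<le> U p"
      using eventually_gt_at_top[of "0::real"] by eventually_elim (use bounds in auto)
  qed
qed

end
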